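(* Let $X,Y$ be Banach spaces, let $-A$ be the generator of a strongly continuous semigroup $(T(t))_{t\ge0}$ on $X$, and let $C:\mathcal D(A)\to Y$ be linear and bounded for the graph norm $\|x\|+\|Ax\|$. Suppose that $(A,C)$ is an admissible and exactly observable BFC-system. Then $\varepsilon(t):=\inf_{\|x\|=1}\|T(t)x\|>0$ for all $t>0$.
   Context: For $\tau\in(0,\infty]$ set $M(\tau)^2:=\sup_{x\in\mathcal D(A),\|x\|=1}\int_0^\tau\|CT(t)x\|_Y^2\,dt$ and $m(\tau)^2:=\inf_{x\in\mathcal D(A),\|x\|=1}\int_0^\tau\|CT(t)x\|_Y^2\,dt$. $C$ is admissible in time $\tau$ if $M(\tau)<\infty$ (this does not depend on $\tau\in(0,\infty)$), and exactly observable in time $\eta$ if $m(\eta)>0$. $(A,C)$ is a BFC-system (backward-forward conditioning) if there exist $0<\eta<\tau$ such that $C$ is admissible and exactly observable in time $\tau$ and $M(\eta)<m(\tau)$ (equivalently $\|\Psi_\tau^{-1}\|\,\|\Psi_\eta\|<1$, where $\Psi_s x=CT(\cdot)x\in L^2(0,s;Y)$, since $\|\Psi_s\|=M(s)$ and $\|\Psi_\tau^{-1}\|=1/m(\tau)$). *)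

theory Defs
  imports "HOL-Analysis.Analysis"
begin

definition c0_semigroup :: "(real \<Rightarrow> 'a::banach \<Rightarrow>\<^sub>L 'a) \<Rightarrow> bool" where
  "c0_semigroup T \<longleftrightarrow>
     T 0 = id_blinfun \<and>
     (\<forall>s\<ge>0. \<forall>t\<ge>0. T (s + t) = T s o\<^sub>L T t) \<and>
     (\<forall>x. ((\<lambda>t. blinfun_apply (T t) x) \<longlongrightarrow> x) (at_right 0))"

text \<open>Domain of the generator of T, and the generator G itself
  (G x = lim_{h -> 0+} (T h x - x)/h). In the paper the generator is -A.\<close>
definition sg_dom :: "(real \<Rightarrow> 'a::banach \<Rightarrow>\<^sub>L 'a) \<Rightarrow> 'a set" where
  "sg_dom T = {x. \<exists>y. ((\<lambda>h. (1 / h) *\<^sub>R (blinfun_apply (T h) x - x)) \<longlongrightarrow> y) (at_right 0)}"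

definition sg_gen :: "(real \<Rightarrow> 'a::banach \<Rightarrow>\<^sub>L 'a) \<Rightarrow> 'a \<Rightarrow> 'a" where
  "sg_gen T x = Lim (at_right 0) (\<lambda>h. (1 / h) *\<^sub>R (blinfun_apply (T h) x - x))"

definition obs_energy :: "(real \<Rightarrow> 'a::banach \<Rightarrow>\<^sub>L 'a) \<Rightarrow> ('a \<Rightarrow> 'b::banach) \<Rightarrow> real \<Rightarrow> 'a \<Rightarrow> real" where
  "obs_energy T C s x = integral {0..s} (\<lambda>t. (norm (C (blinfun_apply (T t) x)))\<^sup>2)"

definition dom_sphere :: "(real \<Rightarrow> 'a::banach \<Rightarrow>\<^sub>L 'a) \<Rightarrow> 'a set" where
  "dom_sphere T = {x \<in> sg_dom T. norm x = 1}"

definition M_obs :: "(real \<Rightarrow> 'a::banach \<Rightarrow>\<^sub>L 'a) \<Rightarrow> ('a \<Rightarrow> 'b::banach) \<Rightarrow> real \<Rightarrow> real" where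
  "M_obs T C s = sqrt (SUP x\<in>dom_sphere T. obs_energy T C s x)"

definition m_obs :: "(real \<Rightarrow> 'a::banach \<Rightarrow>\<^sub>L 'a) \<Rightarrow> ('a \<Rightarrow> 'b::banach) \<Rightarrow> real \<Rightarrow> real" where
  "m_obs T C s = sqrt (INF x\<in>dom_sphere T. obs_energy T C s x)"

text \<open>Admissible in time s: M(s) < infinity, i.e. the energies are bounded above.\<close>
definition admissible :: "(real \<Rightarrow> 'a::banach \<Rightarrow>\<^sub>L 'a) \<Rightarrow> ('a \<Rightarrow> 'b::banach) \<Rightarrow> real \<Rightarrow> bool" where
  "admissible T C s \<longleftrightarrow> bdd_above (obs_energy T C s ` dom_sphere T)"

definition exactly_observable :: "(real \<Rightarrow> 'a::banach \<Rightarrow>\<^sub>L 'a) \<Rightarrow> ('a \<Rightarrow> 'b::banach) \<Rightarrow> real \<Rightarrow> bool" where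
  "exactly_observable T C s \<longleftrightarrow> m_obs T C s > 0"

definition BFC_system :: "(real \<Rightarrow> 'a::banach \<Rightarrow>\<^sub>L 'a) \<Rightarrow> ('a \<Rightarrow> 'b::banach) \<Rightarrow> bool" where
  "BFC_system T C \<longleftrightarrow> (\<exists>\<eta> \<tau>. 0 < \<eta> \<and> \<eta> < \<tau> \<and> admissible T C \<tau> \<and>
       exactly_observable T C \<tau> \<and> M_obs T C \<eta> < m_obs T C \<tau>)"

definition sg_eps :: "(real \<Rightarrow> 'a::banach \<Rightarrow>\<^sub>L 'a) \<Rightarrow> real \<Rightarrow> real" where
  "sg_eps T t = (INF x\<in>{x. norm x = 1}. norm (blinfun_apply (T t) x))"

end

theory Submission
  imports Defs
begin


lemma banach_steinhaus_seq:
  fixes F :: "nat \<Rightarrow> 'a::banach \<Rightarrow>\<^sub>L 'b::real_normed_vector"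
  assumes pw: "\<And>x. \<exists>b. \<forall>n. norm (blinfun_apply (F n) x) \<le> b"
  shows "\<exists>K. \<forall>n. norm (F n) \<le> K"
proof -
  define G where "G k = {x. \<forall>n. norm (blinfun_apply (F n) x) \<le> real k}" for k :: nat
  have clG: "closed (G k)" for k
  proof -
    have "G k = (\<Inter>n. {x. norm (blinfun_apply (F n) x) \<le> real k})"
      unfolding G_def by auto
    moreover have "closed {x. norm (blinfun_apply (F n) x) \<le> real k}" for n
      by (intro closed_Collect_le continuous_intros)
    ultimately show ?thesis by auto
  qed
  have UG: "\<Union>(range G) = UNIV"
  proof safe
    fix x
    obtain b where "\<forall>n. norm (blinfun_apply (F n) x) \<le> b" using pw by blast
    moreover obtain k :: nat where "b \<le> real k" using real_arch_simple by blast
    ultimately have "x \<in> G k" unfolding G_def by (auto intro: order_trans)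
    then show "x \<in> \<Union>(range G)" by blast
  qed simp
  have "\<exists>k. interior (G k) \<noteq> {}"
  proof (rule ccontr)
    assume "\<not> ?thesis"
    then have "euclidean interior_of \<Union>(range G) = {}"
      by (intro Baire_category_alt) (auto simp: completely_metrizable_space_euclidean clG)
    then show False using UG by simp
  qed
  then obtain k x0 where "x0 \<in> interior (G k)" by blast
  then obtain r where r: "r > 0" "ball x0 r \<subseteq> G k"
    using open_contains_ball by (metis interior_subset open_interior subset_trans)
  have "norm (F n) \<le> 4 * real k / r" for n
  proof (rule norm_blinfun_bound)
    show "0 \<le> 4 * real k / r" using r by simp
    fix x
    show "norm (blinfun_apply (F n) x) \<le> 4 * real k / r * norm x"
    proof (cases "x = 0")
      case True then show ?thesis by simp
    next
      case False
      define c where "c = r / (2 * norm x)"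
      have c: "c > 0" using r False by (simp add: c_def)
      have "norm (c *\<^sub>R x) < r" using r False by (simp add: c_def)
      then have "x0 + c *\<^sub>R x \<in> G k" "x0 \<in> G k"
        using r by (auto simp: dist_norm)
      then have h1: "norm (F n (x0 + c *\<^sub>R x)) \<le> real k" "norm (F n x0) \<le> real k"
        unfolding G_def by auto
      have "c * norm (F n x) = norm (F n (x0 + c *\<^sub>R x) - F n x0)"
        using c by (simp add: blinfun.add_right blinfun.scaleR_right)
      also have "\<dots> \<le> 2 * real k" using h1 norm_triangle_ineq4[of "F n (x0 + c *\<^sub>R x)" "F n x0"] by linarith
      finally have "norm (F n x) \<le> 2 * real k / c" using c by (simp add: field_simps)
      also have "\<dots> = 4 * real k / r * norm x" using r False by (simp add: c_def field_simps)
      finally show ?thesis .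
    qed
  qed
  then show ?thesis by blast
qed


lemma sg_props:
  assumes "c0_semigroup T"
  shows "T 0 = id_blinfun" "\<And>s t. s \<ge> 0 \<Longrightarrow> t \<ge> 0 \<Longrightarrow> T (s + t) = T s o\<^sub>L T t"
    "\<And>x. ((\<lambda>t. blinfun_apply (T t) x) \<longlongrightarrow> x) (at_right 0)"
  using assms unfolding c0_semigroup_def by auto

lemma sg_local_bound:
  fixes T :: "real \<Rightarrow> 'a::banach \<Rightarrow>\<^sub>L 'a"
  assumes sg: "c0_semigroup T"
  shows "\<exists>\<delta>>0. \<exists>K. \<forall>s. 0 \<le> s \<and> s \<le> \<delta> \<longrightarrow> norm (T s) \<le> K"
proof (rule ccontr)
  assume H: "\<not> ?thesis"
  have "\<exists>s. 0 \<le> s \<and> s \<le> 1 / (real n + 1) \<and> norm (T s) > real n + 1" for n :: nat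
  proof -
    have "(0::real) < 1 / (real n + 1)" by simp
    then have "\<not> (\<forall>s. 0 \<le> s \<and> s \<le> 1 / (real n + 1) \<longrightarrow> norm (T s) \<le> real n + 1)"
      using H by blast
    then show ?thesis by (auto simp: not_le)
  qed
  then obtain s where s: "\<And>n. 0 \<le> s n" "\<And>n. s n \<le> 1 / (real n + 1)" "\<And>n. norm (T (s n)) > real n + 1"
    by metis
  have spos: "s n > 0" for n
  proof (rule ccontr)
    assume "\<not> s n > 0"
    then have "s n = 0" using s(1)[of n] by simp
    then have "norm (T (s n)) \<le> 1" using sg_props(1)[OF sg] by (simp add: norm_blinfun_id_le)
    then show False using s(3)[of n] by simp
  qed
  have "s \<longlonglongrightarrow> 0"
  proof (rule tendsto_sandwich[of "\<lambda>_. 0" _ _ "\<lambda>n. 1 / (real n + 1)"])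
    show "\<forall>\<^sub>F n in sequentially. 0 \<le> s n" using s(1) by simp
    show "\<forall>\<^sub>F n in sequentially. s n \<le> 1 / (real n + 1)" using s(2) by simp
    show "(\<lambda>n. 1 / (real n + 1)) \<longlonglongrightarrow> 0" using LIMSEQ_inverse_real_of_nat_add[of 0] by (simp add: inverse_eq_divide add.commute)
  qed simp
  then have sr: "filterlim s (at_right 0) sequentially"
    using spos by (intro tendsto_imp_filterlim_at_right) auto
  have "\<exists>b. \<forall>n. norm (blinfun_apply (T (s n)) x) \<le> b" for x
  proof -
    have "(\<lambda>n. blinfun_apply (T (s n)) x) \<longlonglongrightarrow> x"
      using filterlim_compose[OF sg_props(3)[OF sg, of x] sr] by simp
    then have "Bseq (\<lambda>n. blinfun_apply (T (s n)) x)" by (intro convergent_imp_Bseq convergentI)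
    then show ?thesis unfolding Bseq_def by blast
  qed
  then obtain K where K: "\<And>n. norm (T (s n)) \<le> K"
    using banach_steinhaus_seq[of "\<lambda>n. T (s n)"] by blast
  obtain n :: nat where "K \<le> real n" using real_arch_simple by blast
  then show False using K[of n] s(3)[of n] by simp
qed


lemma sg_cont:
  fixes T :: "real \<Rightarrow> 'a::banach \<Rightarrow>\<^sub>L 'a"
  assumes sg: "c0_semigroup T" and dpos: "\<delta> > 0"
    and K: "\<forall>s. 0 \<le> s \<and> s \<le> \<delta> \<longrightarrow> norm (T s) \<le> K"
  shows "continuous_on {0..\<delta>} (\<lambda>t. blinfun_apply (T t) x)"
  unfolding continuous_on_iff
proof (intro ballI allI impI)
  fix t e :: real
  assume t: "t \<in> {0..\<delta>}" and e: "e > 0"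
  have K0: "K \<ge> 0" using K dpos norm_ge_zero[of "T 0"] by (metis order.trans less_imp_le order_refl)
  have "e / (K + 1) > 0" using e K0 by simp
  then have "\<forall>\<^sub>F h in at_right 0. dist (blinfun_apply (T h) x) x < e / (K + 1)"
    using sg_props(3)[OF sg, of x] unfolding tendsto_iff by blast
  then obtain b where b: "b > 0" "\<And>h. h > 0 \<Longrightarrow> h < b \<Longrightarrow> dist (blinfun_apply (T h) x) x < e / (K + 1)"
    unfolding eventually_at_right_field by auto
  have key: "norm (blinfun_apply (T v) x - blinfun_apply (T u) x) < e"
    if "0 \<le> u" "u < v" "v \<le> \<delta>" "v - u < b" for u v
  proof -
    have "T v = T u o\<^sub>L T (v - u)" using sg_props(2)[OF sg, of u "v - u"] that by simp
    then have "blinfun_apply (T v) x - blinfun_apply (T u) x = T u (T (v - u) x - x)"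
      by (simp add: blinfun.diff_right)
    also have "norm \<dots> \<le> K * norm (T (v - u) x - x)"
    proof -
      have "norm (T u) \<le> K" using K that by auto
      then show ?thesis by (rule order_trans[OF norm_blinfun mult_right_mono]) simp
    qed
    also have "\<dots> \<le> K * (e / (K + 1))"
      using b(2)[of "v - u"] that K0 by (intro mult_left_mono) (auto simp: dist_norm)
    also have "\<dots> < e" using K0 e by (simp add: field_simps)
    finally show ?thesis .
  qed
  show "\<exists>d>0. \<forall>u\<in>{0..\<delta>}. dist u t < d \<longrightarrow> dist (blinfun_apply (T u) x) (blinfun_apply (T t) x) < e"
  proof (intro exI[of _ b] conjI ballI impI b(1))
    fix u assume u: "u \<in> {0..\<delta>}" "dist u t < b"
    consider "u < t" | "u = t" | "t < u" by linarith
    then show "dist (blinfun_apply (T u) x) (blinfun_apply (T t) x) < e"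
    proof cases
      case 1 then show ?thesis using key[of u t] u t by (auto simp: dist_norm norm_minus_commute)
    next
      case 2 then show ?thesis using e by simp
    next
      case 3 then show ?thesis using key[of t u] u t by (auto simp: dist_norm)
    qed
  qed
qed


lemma right_quot:
  fixes F :: "real \<Rightarrow> 'a::real_normed_vector"
  assumes D: "(F has_vector_derivative v) (at a within {0..d})" and a: "0 \<le> a" "a < d"
  shows "((\<lambda>h. (1 / h) *\<^sub>R (F (a + h) - F a)) \<longlongrightarrow> v) (at_right 0)"
proof -
  have "((\<lambda>y. (1 / norm (y - a)) *\<^sub>R (F y - (F a + (y - a) *\<^sub>R v))) \<longlongrightarrow> 0) (at a within {0..d})"
    using D unfolding has_vector_derivative_def has_derivative_within by blast
  moreover have "filterlim (\<lambda>h. a + h) (at a within {0..d}) (at_right 0)"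
    unfolding filterlim_at
  proof
    have "\<forall>\<^sub>F h in at_right 0. h < d - a" using a
      by (auto simp: eventually_at_right_field intro!: exI[of _ "d - a"])
    moreover have "\<forall>\<^sub>F h in at_right (0::real). h > 0" by (simp add: eventually_at_right_less)
    ultimately show "\<forall>\<^sub>F h in at_right 0. a + h \<in> {0..d} \<and> a + h \<noteq> a"
      by eventually_elim (use a in auto)
    show "((\<lambda>h. a + h) \<longlongrightarrow> a) (at_right 0)"
      by (rule tendsto_eq_intros tendsto_ident_at tendsto_const | simp)+
  qed
  ultimately have "((\<lambda>h. (1 / norm (a + h - a)) *\<^sub>R (F (a + h) - (F a + (a + h - a) *\<^sub>R v))) \<longlongrightarrow> 0) (at_right 0)"
    by (rule filterlim_compose)
  then have "((\<lambda>h. (1 / h) *\<^sub>R (F (a + h) - F a) - v) \<longlongrightarrow> 0) (at_right 0)"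
  proof (rule Lim_transform_eventually)
    have "\<forall>\<^sub>F h in at_right (0::real). h > 0" by (simp add: eventually_at_right_less)
    then show "\<forall>\<^sub>F h in at_right 0. (1 / norm (a + h - a)) *\<^sub>R (F (a + h) - (F a + (a + h - a) *\<^sub>R v))
        = (1 / h) *\<^sub>R (F (a + h) - F a) - v"
      by eventually_elim (simp add: algebra_simps)
  qed
  then show ?thesis using Lim_null by blast
qed


lemma sg_dense:
  fixes T :: "real \<Rightarrow> 'a::banach \<Rightarrow>\<^sub>L 'a"
  assumes sg: "c0_semigroup T"
  shows "x \<in> closure (sg_dom T)"
proof -
  obtain \<delta> K where dpos: "\<delta> > 0" and K: "\<forall>s. 0 \<le> s \<and> s \<le> \<delta> \<longrightarrow> norm (T s) \<le> K"
    using sg_local_bound[OF sg] by blast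
  define g where "g s = blinfun_apply (T s) x" for s
  define F where "F a = integral {0..a} g" for a
  have gc: "continuous_on {0..\<delta>} g" unfolding g_def by (rule sg_cont[OF sg dpos K])
  have gi: "g integrable_on {a..b}" if "0 \<le> a" "b \<le> \<delta>" for a b
    using that by (intro integrable_continuous_interval continuous_on_subset[OF gc]) auto
  have Fd: "((\<lambda>h. (1 / h) *\<^sub>R (F (a + h) - F a)) \<longlongrightarrow> g a) (at_right 0)" if "0 \<le> a" "a < \<delta>" for a
    using that unfolding F_def
    by (intro right_quot[of _ _ _ \<delta>] integral_has_vector_derivative gc) auto
  have F0: "F 0 = 0" by (simp add: F_def)
  have g0: "g 0 = x" using sg_props(1)[OF sg] by (simp add: g_def)
  have indom: "(1 / h) *\<^sub>R F h \<in> sg_dom T" if h: "0 < h" "h < \<delta>" for h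
  proof -
    have eq: "(1 / k) *\<^sub>R (blinfun_apply (T k) ((1 / h) *\<^sub>R F h) - (1 / h) *\<^sub>R F h)
        = (1 / h) *\<^sub>R ((1 / k) *\<^sub>R (F (h + k) - F h) - (1 / k) *\<^sub>R (F (0 + k) - F 0))"
      if k: "0 < k" "k < \<delta> - h" for k
    proof -
      have "blinfun_apply (T k) (F h) = integral {0..h} (\<lambda>s. blinfun_apply (T k) (g s))"
        unfolding F_def using h by (intro integral_blinfun_apply[symmetric] gi) auto
      also have "\<dots> = integral {0..h} (\<lambda>s. g (k + s))"
      proof (rule integral_cong)
        fix s assume "s \<in> {0..h}"
        then show "blinfun_apply (T k) (g s) = g (k + s)"
          unfolding g_def using sg_props(2)[OF sg, of k s] k by simp
      qed
      also have "\<dots> = integral {k..h + k} g"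
      proof -
        have "(g has_integral integral {0 + k..h + k} g) {0 + k..h + k}"
          using k h by (intro integrable_integral gi) auto
        then have "((g \<circ> (+) k) has_integral integral {k..h + k} g) {0..h}"
          using has_integral_shift_Icc_real[of g k _ 0 h, THEN iffD2] by simp
        then show ?thesis by (simp add: o_def integral_unique)
      qed
      also have "\<dots> = F (h + k) - F k"
        unfolding F_def using Henstock_Kurzweil_Integration.integral_combine[where a=0 and c=k and b="h + k" and f=g] k h gi[of 0 "h + k"] by (auto simp: algebra_simps)
      finally have "blinfun_apply (T k) (F h) = F (h + k) - F k" .
      then show ?thesis using k F0
        by (simp add: blinfun.scaleR_right algebra_simps flip: scaleR_right_distrib)
    qed
    have "((\<lambda>k. (1 / h) *\<^sub>R ((1 / k) *\<^sub>R (F (h + k) - F h) - (1 / k) *\<^sub>R (F (0 + k) - F 0)))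
         \<longlongrightarrow> (1 / h) *\<^sub>R (g h - g 0)) (at_right 0)"
      using h dpos by (intro tendsto_scaleR tendsto_const tendsto_diff Fd) auto
    then have "((\<lambda>k. (1 / k) *\<^sub>R (blinfun_apply (T k) ((1 / h) *\<^sub>R F h) - (1 / h) *\<^sub>R F h))
         \<longlongrightarrow> (1 / h) *\<^sub>R (g h - g 0)) (at_right 0)"
    proof (rule Lim_transform_eventually)
      have "\<forall>\<^sub>F k in at_right 0. k < \<delta> - h" using h
        by (auto simp: eventually_at_right_field intro!: exI[of _ "\<delta> - h"])
      moreover have "\<forall>\<^sub>F k in at_right (0::real). k > 0" by (simp add: eventually_at_right_less)
      ultimately show "\<forall>\<^sub>F k in at_right 0. (1 / h) *\<^sub>R ((1 / k) *\<^sub>R (F (h + k) - F h) - (1 / k) *\<^sub>R (F (0 + k) - F 0))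
          = (1 / k) *\<^sub>R (blinfun_apply (T k) ((1 / h) *\<^sub>R F h) - (1 / h) *\<^sub>R F h)"
        by eventually_elim (use eq in auto)
    qed
    then show ?thesis unfolding sg_dom_def by blast
  qed
  have lim: "((\<lambda>h. (1 / h) *\<^sub>R (F (0 + h) - F 0)) \<longlongrightarrow> g 0) (at_right 0)"
    using dpos by (intro Fd) auto
  have "g 0 \<in> closure (sg_dom T)"
  proof (rule Lim_in_closed_set[OF closed_closure _ _ lim])
    have "\<forall>\<^sub>F k in at_right 0. k < \<delta>" using dpos
      by (auto simp: eventually_at_right_field intro!: exI[of _ "\<delta>"])
    moreover have "\<forall>\<^sub>F k in at_right (0::real). k > 0" by (simp add: eventually_at_right_less)
    ultimately show "\<forall>\<^sub>F h in at_right 0. (1 / h) *\<^sub>R (F (0 + h) - F 0) \<in> closure (sg_dom T)"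
      by eventually_elim (use indom F0 closure_subset in auto)
    show "at_right (0::real) \<noteq> bot" by simp
  qed
  then show ?thesis using g0 by simp
qed


lemma dom_scale:
  assumes "x \<in> sg_dom T" shows "c *\<^sub>R x \<in> sg_dom T"
proof -
  obtain y where y: "((\<lambda>h. (1 / h) *\<^sub>R (blinfun_apply (T h) x - x)) \<longlongrightarrow> y) (at_right 0)"
    using assms unfolding sg_dom_def by blast
  have "((\<lambda>h. c *\<^sub>R ((1 / h) *\<^sub>R (blinfun_apply (T h) x - x))) \<longlongrightarrow> c *\<^sub>R y) (at_right 0)"
    by (intro tendsto_scaleR tendsto_const y)
  then have "((\<lambda>h. (1 / h) *\<^sub>R (blinfun_apply (T h) (c *\<^sub>R x) - c *\<^sub>R x)) \<longlongrightarrow> c *\<^sub>R y) (at_right 0)"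
    by (simp add: blinfun.scaleR_right algebra_simps)
  then show ?thesis unfolding sg_dom_def by blast
qed

lemma dom_invariant:
  assumes sg: "c0_semigroup T" and x: "x \<in> sg_dom T" and t: "t \<ge> 0"
  shows "blinfun_apply (T t) x \<in> sg_dom T"
proof -
  obtain y where y: "((\<lambda>h. (1 / h) *\<^sub>R (blinfun_apply (T h) x - x)) \<longlongrightarrow> y) (at_right 0)"
    using x unfolding sg_dom_def by blast
  have "((\<lambda>h. blinfun_apply (T t) ((1 / h) *\<^sub>R (blinfun_apply (T h) x - x))) \<longlongrightarrow> blinfun_apply (T t) y) (at_right 0)"
    by (rule bounded_linear.tendsto[OF blinfun.bounded_linear_right y])
  then have "((\<lambda>h. (1 / h) *\<^sub>R (blinfun_apply (T h) (blinfun_apply (T t) x) - blinfun_apply (T t) x)) \<longlongrightarrow> blinfun_apply (T t) y) (at_right 0)"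
  proof (rule Lim_transform_eventually)
    have "\<forall>\<^sub>F k in at_right (0::real). k > 0" by (simp add: eventually_at_right_less)
    then show "\<forall>\<^sub>F h in at_right 0. blinfun_apply (T t) ((1 / h) *\<^sub>R (blinfun_apply (T h) x - x)) =
      (1 / h) *\<^sub>R (blinfun_apply (T h) (blinfun_apply (T t) x) - blinfun_apply (T t) x)"
    proof eventually_elim
      case (elim h)
      have "T h o\<^sub>L T t = T t o\<^sub>L T h"
        using sg_props(2)[OF sg, of h t] sg_props(2)[OF sg, of t h] t elim by (simp add: add.commute)
      then have "blinfun_apply (T h) (blinfun_apply (T t) x) = blinfun_apply (T t) (blinfun_apply (T h) x)"
        by (metis blinfun_apply_blinfun_compose)
      then show ?case by (simp add: blinfun.scaleR_right blinfun.diff_right)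
    qed
  qed
  then show ?thesis unfolding sg_dom_def by blast
qed

lemma dom_zero: "0 \<in> sg_dom T"
  unfolding sg_dom_def by (auto intro!: exI[of _ 0])


theorem lemma3p1:
  fixes T :: "real \<Rightarrow> 'x::banach \<Rightarrow>\<^sub>L 'x"
    and A :: "'x \<Rightarrow> 'x"
    and C :: "'x \<Rightarrow> 'y::banach"
  assumes sg: "c0_semigroup T"
    and gen: "\<forall>x\<in>sg_dom T. A x = - sg_gen T x"
    and C_add: "\<forall>x\<in>sg_dom T. \<forall>z\<in>sg_dom T. C (x + z) = C x + C z"
    and C_scale: "\<forall>x\<in>sg_dom T. \<forall>c::real. C (c *\<^sub>R x) = c *\<^sub>R C x"
    and C_bdd: "\<exists>K. \<forall>x\<in>sg_dom T. norm (C x) \<le> K * (norm x + norm (A x))"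
    and bfc: "BFC_system T C"
  shows "\<forall>t>0. sg_eps T t > 0"
proof -
  define D where "D = sg_dom T"
  define S where "S = dom_sphere T"
  define E where "E s x = obs_energy T C s x" for s x
  define f where "f x t = (norm (C (blinfun_apply (T t) x)))\<^sup>2" for x t
  have E_def': "E s x = integral {0..s} (f x)" for s x
    unfolding E_def f_def obs_energy_def by simp
  have C0: "C 0 = 0" using C_scale dom_zero[of T] by (metis scaleR_zero_left)
  have Enonneg: "E s x \<ge> 0" for s x
    unfolding E_def' f_def
    by (cases "(\<lambda>t. (norm (C (blinfun_apply (T t) x)))\<^sup>2) integrable_on {0..s}")
       (auto intro: integral_nonneg simp: not_integrable_integral)
  have Escale: "E s (c *\<^sub>R x) = c\<^sup>2 * E s x" if "x \<in> D" for s c x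
  proof -
    have "f (c *\<^sub>R x) t = c\<^sup>2 * f x t" if "t \<in> {0..s}" for t
    proof -
      have "blinfun_apply (T t) x \<in> D" using dom_invariant[OF sg, of x t] \<open>x \<in> D\<close> that
        unfolding D_def by auto
      then show ?thesis unfolding f_def using C_scale
        by (simp add: D_def blinfun.scaleR_right power_mult_distrib)
    qed
    then have "E s (c *\<^sub>R x) = integral {0..s} (\<lambda>t. c\<^sup>2 * f x t)"
      unfolding E_def' by (rule integral_cong)
    then show ?thesis by (simp add: E_def')
  qed
  have Emono: "E s1 x \<le> E s2 x" if "0 \<le> s1" "s1 \<le> s2" "f x integrable_on {0..s2}" for s1 s2 x
    unfolding E_def' using that
    by (intro integral_subset_le) (auto simp: f_def intro: integrable_on_subinterval)
  obtain \<eta> \<tau> where et: "0 < \<eta>" "\<eta> < \<tau>" and adm: "bdd_above (E \<tau> ` S)"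
    and eo: "m_obs T C \<tau> > 0" and Mm: "M_obs T C \<eta> < m_obs T C \<tau>"
    using bfc unfolding BFC_system_def admissible_def exactly_observable_def E_def S_def by blast
  define mt where "mt = Inf (E \<tau> ` S)"
  define Mh where "Mh = Sup (E \<eta> ` S)"
  define B where "B = Sup (E \<tau> ` S)"
  have mt_pos: "mt > 0" using eo unfolding m_obs_def mt_def E_def S_def by simp
  have Mh_mt: "Mh < mt" using Mm unfolding M_obs_def m_obs_def mt_def Mh_def E_def S_def by simp
  have bddb: "bdd_below (E s ` S)" for s using Enonneg by (intro bdd_belowI[of _ 0]) auto
  have Ssph: "x \<in> S \<longleftrightarrow> x \<in> D \<and> norm x = 1" for x
    unfolding S_def D_def dom_sphere_def by simp
  have Sint: "f x integrable_on {0..\<tau>}" and SB: "\<And>s. 0 \<le> s \<Longrightarrow> s \<le> \<tau> \<Longrightarrow> E s x \<le> B"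
    and Smt: "mt \<le> E \<tau> x" if "x \<in> S" for x
  proof -
    show mtx: "mt \<le> E \<tau> x" unfolding mt_def using that bddb by (intro cInf_lower) auto
    then have "E \<tau> x \<noteq> 0" using mt_pos by simp
    then show fi: "f x integrable_on {0..\<tau>}" unfolding E_def' using not_integrable_integral by blast
    fix s assume "0 \<le> s" "s \<le> \<tau>"
    then have "E s x \<le> E \<tau> x" using Emono fi by blast
    also have "\<dots> \<le> B" unfolding B_def using that adm by (intro cSup_upper) auto
    finally show "E s x \<le> B" .
  qed
  show ?thesis
  proof (cases "\<exists>z::'x. norm z = 1")
    case False
    then have U: "{x::'x. norm x = 1} = {}" by auto
    then have Se: "S = {}" using Ssph by auto
    have "sg_eps T t = mt" for t by (simp add: sg_eps_def mt_def U Se)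
    then show ?thesis using mt_pos by simp
  next
    case True
    then obtain z :: 'x where z: "norm z = 1" by blast
    have Sne: "S \<noteq> {}"
    proof
      assume Se: "S = {}"
      have "D \<subseteq> {0}"
      proof
        fix y assume yD: "y \<in> D"
        show "y \<in> {0}"
        proof (rule ccontr)
          assume "y \<notin> {0}"
          then have "(1 / norm y) *\<^sub>R y \<in> S" using Ssph dom_scale yD unfolding D_def by auto
          then show False using Se by simp
        qed
      qed
      then have "closure D \<subseteq> {0}" by (metis closure_mono closure_closed closed_singleton)
      moreover have "z \<in> closure D" unfolding D_def by (rule sg_dense[OF sg])
      ultimately show False using z by auto
    qed
    then obtain x0 where x0: "x0 \<in> S" by blast
    have Bpos: "B > 0" using Smt[OF x0] SB[OF x0, of \<tau>] mt_pos et by linarith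
    define c where "c = sqrt ((mt - Mh) / B)"
    have cpos: "c > 0" using Bpos Mh_mt by (simp add: c_def)
    have Sbound: "c * norm x \<le> norm (T \<eta> x)" if xS: "x \<in> S" for x
    proof -
      define y where "y = T \<eta> x"
      have yD: "y \<in> D" using dom_invariant[OF sg, of x \<eta>] xS Ssph et unfolding D_def y_def by auto
      have split: "E \<tau> x = E \<eta> x + E (\<tau> - \<eta>) y"
      proof -
        have fi: "f x integrable_on {0..\<tau>}" by (rule Sint[OF xS])
        have "E \<tau> x = E \<eta> x + integral {\<eta>..\<tau>} (f x)"
          unfolding E_def' using Henstock_Kurzweil_Integration.integral_combine[of 0 \<eta> \<tau> "f x"] fi et by simp
        moreover have "integral {\<eta>..\<tau>} (f x) = E (\<tau> - \<eta>) y"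
        proof -
          have "(f x has_integral integral {\<eta>..\<tau>} (f x)) {0 + \<eta>..(\<tau> - \<eta>) + \<eta>}"
          proof -
            have "f x integrable_on {\<eta>..\<tau>}" using integrable_on_subinterval[OF fi, of \<eta> \<tau>] et by auto
            then show ?thesis by (simp add: integrable_integral)
          qed
          then have "((f x \<circ> (+) \<eta>) has_integral integral {\<eta>..\<tau>} (f x)) {0..\<tau> - \<eta>}"
            using has_integral_shift_Icc_real[of "f x" \<eta> _ 0 "\<tau> - \<eta>", THEN iffD2] by simp
          then have "integral {\<eta>..\<tau>} (f x) = integral {0..\<tau> - \<eta>} (f x \<circ> (+) \<eta>)"
            by (simp add: integral_unique)
          also have "\<dots> = integral {0..\<tau> - \<eta>} (f y)"
          proof (rule integral_cong)
            fix s assume "s \<in> {0..\<tau> - \<eta>}"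
            then have "T (\<eta> + s) = T s o\<^sub>L T \<eta>" using sg_props(2)[OF sg, of s \<eta>] et by (simp add: add.commute)
            then show "(f x \<circ> (+) \<eta>) s = f y s" unfolding f_def y_def by simp
          qed
          finally show ?thesis unfolding E_def' .
        qed
        ultimately show ?thesis by simp
      qed
      have Ey: "E (\<tau> - \<eta>) y \<le> (norm y)\<^sup>2 * B"
      proof (cases "y = 0")
        case True
        then have "E (\<tau> - \<eta>) y = 0" unfolding E_def' f_def using C0 by simp
        then show ?thesis using True by simp
      next
        case False
        define u where "u = (1 / norm y) *\<^sub>R y"
        have uS: "u \<in> S" using Ssph yD False dom_scale[of y T] unfolding u_def D_def by auto
        have yu: "y = norm y *\<^sub>R u" using False unfolding u_def by simp
        have "E (\<tau> - \<eta>) y = (norm y)\<^sup>2 * E (\<tau> - \<eta>) u"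
          using Escale[of u "\<tau> - \<eta>" "norm y"] uS Ssph yu by metis
        also have "\<dots> \<le> (norm y)\<^sup>2 * B" using SB[OF uS, of "\<tau> - \<eta>"] et by (intro mult_left_mono) auto
        finally show ?thesis .
      qed
      have Ex: "E \<eta> x \<le> Mh"
      proof -
        have "bdd_above (E \<eta> ` S)"
          using SB et by (intro bdd_aboveI[of _ B]) auto
        then show ?thesis unfolding Mh_def using xS by (intro cSup_upper) auto
      qed
      have "mt - Mh \<le> (norm y)\<^sup>2 * B" using Smt[OF xS] split Ey Ex by linarith
      then have "(mt - Mh) / B \<le> (norm y)\<^sup>2" using Bpos by (simp add: field_simps)
      then have "sqrt ((mt - Mh) / B) \<le> sqrt ((norm y)\<^sup>2)" by (simp only: real_sqrt_le_iff)
      then have "c \<le> norm y" unfolding c_def by simp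
      then show ?thesis using xS Ssph y_def by simp
    qed
    have Dbound: "c * norm x \<le> norm (T \<eta> x)" if xD: "x \<in> D" for x
    proof (cases "x = 0")
      case True then show ?thesis by simp
    next
      case False
      define u where "u = (1 / norm x) *\<^sub>R x"
      have uS: "u \<in> S" using Ssph xD False dom_scale[of x T] unfolding u_def D_def by auto
      have xu: "x = norm x *\<^sub>R u" using False unfolding u_def by simp
      have "norm (T \<eta> x) = norm x * norm (T \<eta> u)"
        by (subst xu) (simp add: blinfun.scaleR_right)
      also have "\<dots> \<ge> norm x * (c * norm u)" using Sbound[OF uS] by (intro mult_left_mono) auto
      finally show ?thesis using uS Ssph by (simp add: mult.commute)
    qed
    have allbound: "c * norm x \<le> norm (T \<eta> x)" for x
    proof -
      have "closure D \<subseteq> {x. c * norm x \<le> norm (T \<eta> x)}"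
        by (intro closure_minimal closed_Collect_le continuous_intros) (auto intro: Dbound)
      moreover have "x \<in> closure D" unfolding D_def by (rule sg_dense[OF sg])
      ultimately show ?thesis by auto
    qed
    have iter: "c ^ n * norm x \<le> norm (T (real n * \<eta>) x)" for n x
    proof (induction n arbitrary: x)
      case 0 then show ?case using sg_props(1)[OF sg] by simp
    next
      case (Suc n)
      have "T (real (Suc n) * \<eta>) = T \<eta> o\<^sub>L T (real n * \<eta>)"
        using sg_props(2)[OF sg, of \<eta> "real n * \<eta>"] et by (simp add: algebra_simps)
      then have "norm (T (real (Suc n) * \<eta>) x) = norm (T \<eta> (T (real n * \<eta>) x))" by simp
      moreover have "c * norm (T (real n * \<eta>) x) \<le> norm (T \<eta> (T (real n * \<eta>) x))" by (rule allbound)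
      moreover have "c * (c ^ n * norm x) \<le> c * norm (T (real n * \<eta>) x)"
        using Suc cpos by (intro mult_left_mono) auto
      ultimately show ?case by simp
    qed
    show ?thesis
    proof (intro allI impI)
      fix t :: real assume t: "t > 0"
      obtain n :: nat where n: "t / \<eta> \<le> real n" using real_arch_simple by blast
      then have tn: "t \<le> real n * \<eta>" using et by (simp add: field_simps)
      define N where "N = norm (T (real n * \<eta> - t))"
      have Tn: "T (real n * \<eta>) = T (real n * \<eta> - t) o\<^sub>L T t"
        using sg_props(2)[OF sg, of "real n * \<eta> - t" t] tn t by simp
      have bnd: "c ^ n \<le> N * norm (T t x)" if "norm x = 1" for x
      proof -
        have "c ^ n = c ^ n * norm x" using that by simp
        also have "\<dots> \<le> norm (T (real n * \<eta>) x)" by (rule iter)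
        also have "\<dots> = norm (T (real n * \<eta> - t) (T t x))" using Tn by simp
        also have "\<dots> \<le> N * norm (T t x)" unfolding N_def by (rule norm_blinfun)
        finally show ?thesis .
      qed
      have cn: "c ^ n > 0" using cpos by simp
      have Npos: "N > 0"
      proof (rule ccontr)
        assume "\<not> N > 0"
        then have "N = 0" unfolding N_def using norm_ge_zero by (metis less_eq_real_def)
        then show False using bnd[OF z] cn by simp
      qed
      have "c ^ n / N \<le> sg_eps T t"
        unfolding sg_eps_def
      proof (rule cInf_greatest)
        show "(\<lambda>x. norm (blinfun_apply (T t) x)) ` {x. norm x = 1} \<noteq> {}" using z by auto
        fix v assume "v \<in> (\<lambda>x. norm (blinfun_apply (T t) x)) ` {x. norm x = 1}"
        then obtain x where "norm x = 1" "v = norm (T t x)" by auto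
        then show "c ^ n / N \<le> v" using bnd Npos by (simp add: pos_divide_le_eq mult.commute)
      qed
      moreover have "c ^ n / N > 0" using cn Npos by simp
      ultimately show "sg_eps T t > 0" by linarith
    qed
  qed
qed

end
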